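(* Let $d\ge 2$ and $n\ge 2$ be integers, let $k\ge 0$ be such that $n_k\le n<n_{k+1}$, and let $\lambda(n)=(l_{k+1},l_k,\ldots,l_0)$. Then $$\Delta W(D_{n,d};q)=\sum_{i=0}^k d^iq^{2i+1}+\sum_{i=0}^{k'}d^i(l_i+1)q^{2i+2},$$ where $k'=k-1$ if $n_k\le n<m_k$ and $k'=k$ if $m_k\le n<n_{k+1}$.
   Context: For a connected graph $G$, $W(G;q)=\sum_{\{u,v\}}q^{d(u,v)}$ over unordered pairs of distinct vertices, $d$ the graph distance. The $d$-ary dendrimer $D_{n,d}$ is the tree on vertex set $\{1,\ldots,n\}$ defined inductively: $D_{1,d}$ is the single vertex $1$, and $D_{n,d}$ is obtained from $D_{n-1,d}$ by attaching a new leaf $n$ to the smallest-numbered vertex of $D_{n-1,d}$ having degree $\le d$. Set $\Delta W(D_{n,d};q)=W(D_{n,d};q)-W(D_{n-1,d};q)$. Define $n_k=2+(d+1)\frac{d^k-1}{d-1}$ and $m_k=3+2d\frac{d^k-1}{d-1}$ for $k\ge0$. For a vertex $m$ with $n_k\le m<n_{k+1}$, its label is $\lambda(m)=(l_{k+1},l_k,\ldots,l_0)$ where $0\le l_i<d$ and $\sum_{i=0}^{k+1}l_id^i=m-n_k+(d-1)d^k$ (the base-$d$ digits, possibly with a leading zero). *)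

theory Defs
  imports Complex_Main
begin

(* degree of vertex v in the tree on {1..length ps} whose parent list is ps
   (ps ! (u-1) = parent of vertex u, for 2 <= u <= length ps; entry for vertex 1 is a dummy) *)
definition ddeg :: "nat list \<Rightarrow> nat \<Rightarrow> nat" where
  "ddeg ps v = card {u. 2 \<le> u \<and> u \<le> length ps \<and> ps ! (u - 1) = v}
               + (if 2 \<le> v \<and> v \<le> length ps then 1 else 0)"

(* parent list of the d-ary dendrimer D_{m,d}: vertex m+1 attaches to the smallest
   vertex of D_{m,d} of degree <= d *)
fun dpar :: "nat \<Rightarrow> nat \<Rightarrow> nat list" where
  "dpar d 0 = []"
| "dpar d (Suc m) = (let ps = dpar d m in
     ps @ [if m = 0 then 0 else (LEAST v. 1 \<le> v \<and> v \<le> m \<and> ddeg ps v \<le> d)])"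

definition dadj :: "nat \<Rightarrow> nat \<Rightarrow> nat \<Rightarrow> nat \<Rightarrow> bool" where
  "dadj d n u v = (let ps = dpar d n in
     1 \<le> u \<and> u \<le> n \<and> 1 \<le> v \<and> v \<le> n \<and>
     ((2 \<le> u \<and> ps ! (u - 1) = v) \<or> (2 \<le> v \<and> ps ! (v - 1) = u)))"

definition gdist :: "('a \<Rightarrow> 'a \<Rightarrow> bool) \<Rightarrow> 'a \<Rightarrow> 'a \<Rightarrow> nat" where
  "gdist E u v = (LEAST k. \<exists>p. length p = Suc k \<and> hd p = u \<and> last p = v \<and>
                     (\<forall>i<k. E (p ! i) (p ! Suc i)))"

definition WD :: "nat \<Rightarrow> nat \<Rightarrow> real \<Rightarrow> real" where
  "WD d n q = (\<Sum>(u, v) \<in> {(u, v). 1 \<le> u \<and> u < v \<and> v \<le> n}. q ^ gdist (dadj d n) u v)"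

definition nk :: "nat \<Rightarrow> nat \<Rightarrow> nat" where
  "nk d k = 2 + (d + 1) * ((d ^ k - 1) div (d - 1))"

definition mk :: "nat \<Rightarrow> nat \<Rightarrow> nat" where
  "mk d k = 3 + 2 * d * ((d ^ k - 1) div (d - 1))"

(* i-th base-d digit l_i of the label lambda(m), for n_k <= m < n_{k+1} *)
definition lbl :: "nat \<Rightarrow> nat \<Rightarrow> nat \<Rightarrow> nat \<Rightarrow> nat" where
  "lbl d k m i = ((m - nk d k + (d - 1) * d ^ k) div d ^ i) mod d"

end

theory Submission
  imports Defs
begin


definition pa :: "nat \<Rightarrow> nat \<Rightarrow> nat" where
  "pa d u = max 1 ((u + d - 3) div d)"

lemma pa_less: "2 \<le> u \<Longrightarrow> pa d u < u"
proof (cases "d = 0")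
  case True then show ?thesis if "2 \<le> u" using that by (simp add: pa_def)
next
  case False
  assume u: "2 \<le> u"
  have "d * (u - 1) \<ge> u - 1" using False by simp
  moreover have "d * u = d * (u - 1) + d" using u by (cases u) auto
  ultimately have "u + d - 3 < d * u" using False u by linarith
  then have "(u + d - 3) div d < u" using False by (simp add: div_less_iff_less_mult mult.commute)
  then show ?thesis using u by (simp add: pa_def)
qed

function td :: "nat \<Rightarrow> nat \<Rightarrow> nat \<Rightarrow> nat" where
  "td d u v = (if u = v \<or> u = 0 \<or> v = 0 then 0
     else if v < u then Suc (td d (pa d u) v) else Suc (td d u (pa d v)))"
  by pat_completeness auto
termination
  apply (relation "measure (\<lambda>(d,u,v). u + v)")
   apply simp
  subgoal for d u v using pa_less[of u d] by auto
  subgoal for d u v using pa_less[of v d] by auto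
  done

declare td.simps[simp del]



lemma div_eq_bounds: fixes d x v :: nat shows "0 < d \<Longrightarrow> (x div d = v \<longleftrightarrow> d*v \<le> x \<and> x < d*v + d)"
proof -
  assume d: "0 < d"
  have "x div d = v \<longleftrightarrow> v \<le> x div d \<and> \<not> (Suc v \<le> x div d)" by auto
  also have "\<dots> \<longleftrightarrow> v*d \<le> x \<and> \<not> (Suc v * d \<le> x)" using d by (simp only: less_eq_div_iff_mult_less_eq)
  also have "\<dots> \<longleftrightarrow> d*v \<le> x \<and> x < d*v + d" by (auto simp: algebra_simps)
  finally show ?thesis .
qed

lemma pa_char:
  assumes "2 \<le> d" "2 \<le> u" "1 \<le> v"
  shows "pa d u = v \<longleftrightarrow> u \<le> d*v+2 \<and> (v = 1 \<or> d*v+3 \<le> u+d)"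
proof (cases "v = 1")
  case True
  have "pa d u = 1 \<longleftrightarrow> (u + d - 3) div d < 2" by (auto simp: pa_def max_def)
  also have "\<dots> \<longleftrightarrow> u + d - 3 < 2 * d" using assms by (simp add: div_less_iff_less_mult mult.commute)
  also have "\<dots> \<longleftrightarrow> u \<le> d*1+2" using assms by linarith
  finally show ?thesis using True by simp
next
  case False
  then have v2: "2 \<le> v" using assms by simp
  have "pa d u = v \<longleftrightarrow> (u + d - 3) div d = v" using v2 by (auto simp: pa_def max_def)
  also have "\<dots> \<longleftrightarrow> d*v \<le> u + d - 3 \<and> u + d - 3 < d*v + d" using assms by (simp add: div_eq_bounds)
  also have "\<dots> \<longleftrightarrow> u \<le> d*v+2 \<and> d*v+3 \<le> u+d" using assms by linarith
  finally show ?thesis using False by simp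
qed

lemma pa_ge1: "1 \<le> pa d u" by (simp add: pa_def)

lemma pa_props:
  assumes "2 \<le> d" "2 \<le> u"
  shows "u \<le> d * pa d u + 2" "pa d u = 1 \<or> d * pa d u + 3 \<le> u + d"
  using pa_char[OF assms pa_ge1[of d u]] by auto

definition pl :: "nat \<Rightarrow> nat \<Rightarrow> nat list" where
  "pl d m = map (\<lambda>i. if i = 0 then 0 else pa d (Suc i)) [0..<m]"

lemma pl_len[simp]: "length (pl d m) = m" by (simp add: pl_def)

lemma pl_nth: "2 \<le> u \<Longrightarrow> u \<le> m \<Longrightarrow> pl d m ! (u - Suc 0) = pa d u"
proof -
  assume "2 \<le> u" "u \<le> m"
  then have "u - 1 < m" "u - 1 \<noteq> 0" "Suc (u - 1) = u" by auto
  then show ?thesis unfolding pl_def by (simp del: Suc_diff_1 One_nat_def)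
qed

lemma ddeg_pl:
  assumes d: "2 \<le> d" and v: "1 \<le> v" "v \<le> m"
  shows "ddeg (pl d m) v \<le> d \<longleftrightarrow> m < d*v + 2"
proof -
  define lo where "lo = (if v = 1 then 2 else d*v+3-d)"
  have set: "{u. 2 \<le> u \<and> u \<le> length (pl d m) \<and> pl d m ! (u - 1) = v} = {lo..min m (d*v+2)}"
  proof -
    have "{u. 2 \<le> u \<and> u \<le> length (pl d m) \<and> pl d m ! (u - 1) = v} = {u. 2 \<le> u \<and> u \<le> m \<and> pa d u = v}"
      by (auto simp: pl_nth)
    also have "\<dots> = {lo..min m (d*v+2)}"
    proof (rule set_eqI)
      fix u
      show "u \<in> {u. 2 \<le> u \<and> u \<le> m \<and> pa d u = v} \<longleftrightarrow> u \<in> {lo..min m (d*v+2)}"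
      proof (cases "v = 1")
        case True
        then show ?thesis using pa_char[OF d _ v(1), of u] d v unfolding lo_def by auto
      next
        case False
        then have "d * 2 \<le> d * v" using v by simp
        then have "2 \<le> u" if "d*v+3-d \<le> u" using that d by linarith
        then show ?thesis using False pa_char[OF d _ v(1), of u] d v unfolding lo_def by auto
      qed
    qed
    finally show ?thesis .
  qed
  have len: "length (pl d m) = m" by (simp add: pl_def)
  have dd: "ddeg (pl d m) v = (Suc (min m (d*v+2)) - lo) + (if 2 \<le> v then 1 else 0)"
    unfolding ddeg_def set using v by simp
  show ?thesis
  proof (cases "v = 1")
    case True
    then show ?thesis unfolding dd lo_def by auto
  next
    case False
    then have "2 \<le> v" using v by simp
    moreover have "d*2 \<le> d*v" using \<open>2 \<le> v\<close> by simp
    moreover obtain D where D: "D = d * v" by simp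
    ultimately have "2*d \<le> D" by simp
    have e: "ddeg (pl d m) v = Suc (min m (D+2)) - (D+3-d) + 1" unfolding dd lo_def D using False \<open>2 \<le> v\<close> by simp
    show ?thesis unfolding e D[symmetric] using \<open>2*d \<le> D\<close> d by (simp add: min_def) arith
  qed
qed

lemma least_pl:
  assumes d: "2 \<le> d" and m: "1 \<le> m"
  shows "(LEAST v. 1 \<le> v \<and> v \<le> m \<and> ddeg (pl d m) v \<le> d) = pa d (Suc m)"
proof (rule Least_equality)
  let ?v = "pa d (Suc m)"
  have a: "Suc m \<le> d * ?v + 2" "?v = 1 \<or> d * ?v + 3 \<le> Suc m + d"
    using pa_props[OF d, of "Suc m"] m by auto
  have b: "?v < Suc m" using pa_less[of "Suc m" d] m by simp
  show "1 \<le> ?v \<and> ?v \<le> m \<and> ddeg (pl d m) ?v \<le> d"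
    using pa_ge1[of d "Suc m"] ddeg_pl[OF d pa_ge1[of d "Suc m"], of m] a b by simp
  fix y assume y: "1 \<le> y \<and> y \<le> m \<and> ddeg (pl d m) y \<le> d"
  then have "m < d*y + 2" using ddeg_pl[OF d] by blast
  show "?v \<le> y"
  proof (cases "?v = 1")
    case True then show ?thesis using y by simp
  next
    case False
    then have "d * ?v < d * Suc y" using a \<open>m < d*y + 2\<close> by simp
    then show ?thesis by (simp only: mult_less_cancel1) simp
  qed
qed

lemma dpar_pl: "2 \<le> d \<Longrightarrow> dpar d m = pl d m"
proof (induction m)
  case 0 then show ?case by (simp add: pl_def)
next
  case (Suc m)
  have "pl d (Suc m) = pl d m @ [if m = 0 then 0 else pa d (Suc m)]" by (simp add: pl_def)
  then show ?case using Suc least_pl[OF Suc.prems, of m] by (simp add: Let_def)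
qed

lemma dpar_nth: "2 \<le> d \<Longrightarrow> 2 \<le> u \<Longrightarrow> u \<le> n \<Longrightarrow> dpar d n ! (u - Suc 0) = pa d u"
  by (simp add: dpar_pl pl_nth)

lemma dadj_iff: "2 \<le> d \<Longrightarrow> dadj d n a b \<longleftrightarrow> 1 \<le> a \<and> a \<le> n \<and> 1 \<le> b \<and> b \<le> n \<and>
    ((2 \<le> a \<and> pa d a = b) \<or> (2 \<le> b \<and> pa d b = a))"
  unfolding dadj_def Let_def by (auto simp: dpar_nth)



lemma hd_nth0: "length p = Suc k \<Longrightarrow> p ! 0 = hd p" by (cases p) auto
lemma last_nthk: "length p = Suc k \<Longrightarrow> p ! k = last p"
proof -
  assume "length p = Suc k"
  moreover then have "p \<noteq> []" by auto
  ultimately show ?thesis by (simp add: last_conv_nth)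
qed

lemma td_refl[simp]: "td d u u = 0" by (simp add: td.simps)
lemma td_gt: "1 \<le> v \<Longrightarrow> v < u \<Longrightarrow> td d u v = Suc (td d (pa d u) v)"
  by (subst td.simps) auto
lemma td_lt: "1 \<le> u \<Longrightarrow> u < v \<Longrightarrow> td d u v = Suc (td d u (pa d v))"
  by (subst td.simps) auto

lemma td_nb:
  assumes "2 \<le> w" "1 \<le> u"
  shows "td d u (pa d w) = Suc (td d u w) \<or> td d u w = Suc (td d u (pa d w))"
  using assms(2)
proof (induction u rule: less_induct)
  case (less u)
  have pw: "pa d w < w" "1 \<le> pa d w" using pa_less[OF assms(1)] pa_ge1 by auto
  show ?case
  proof (cases "u = w")
    case True
    then show ?thesis using pw td_gt[of "pa d w" w d] by simp
  next
    case False
    show ?thesis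
    proof (cases "w < u")
      case True
      then have u2: "2 \<le> u" using assms by simp
      have h1: "td d u w = Suc (td d (pa d u) w)" using td_gt[of w u d] True assms by simp
      have h2: "td d u (pa d w) = Suc (td d (pa d u) (pa d w))" using td_gt[of "pa d w" u d] True pw by simp
      have "pa d u < u" "1 \<le> pa d u" using pa_less[OF u2] pa_ge1 by auto
      then show ?thesis using less.IH[of "pa d u"] h1 h2 by auto
    next
      case False
      then have "u < w" using \<open>u \<noteq> w\<close> by simp
      then show ?thesis using td_lt[OF less.prems \<open>u < w\<close>] by simp
    qed
  qed
qed

lemma td_step:
  assumes d: "2 \<le> d" and u: "1 \<le> u" and e: "dadj d n a b"
  shows "td d u b \<le> Suc (td d u a)"
proof -
  from e[unfolded dadj_iff[OF d]] have "(2 \<le> a \<and> pa d a = b) \<or> (2 \<le> b \<and> pa d b = a)" by simp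
  then show ?thesis
  proof
    assume h: "2 \<le> a \<and> pa d a = b"
    then show ?thesis using td_nb[of a u d] u by auto
  next
    assume h: "2 \<le> b \<and> pa d b = a"
    then show ?thesis using td_nb[of b u d] u by auto
  qed
qed

lemma walk_lower:
  assumes d: "2 \<le> d" and u: "1 \<le> u" and p: "length p = Suc k" "hd p = u"
    "\<forall>i<k. dadj d n (p ! i) (p ! Suc i)"
  shows "i \<le> k \<Longrightarrow> td d u (p ! i) \<le> i"
proof (induction i)
  case 0
  have "p ! 0 = u" using p hd_nth0[OF p(1)] by simp
  then show ?case by simp
next
  case (Suc i)
  then have "dadj d n (p ! i) (p ! Suc i)" using p(3) by simp
  then have "td d u (p ! Suc i) \<le> Suc (td d u (p ! i))" using td_step[OF d u] by blast
  then show ?case using Suc by simp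
qed

lemma walk_exists:
  assumes d: "2 \<le> d"
  shows "1 \<le> u \<Longrightarrow> u \<le> n \<Longrightarrow> 1 \<le> v \<Longrightarrow> v \<le> n \<Longrightarrow>
    \<exists>p. length p = Suc (td d u v) \<and> hd p = u \<and> last p = v \<and>
        (\<forall>i<td d u v. dadj d n (p ! i) (p ! Suc i))"
proof (induction "u + v" arbitrary: u v rule: less_induct)
  case less
  show ?case
  proof (cases "u = v")
    case True
    then show ?thesis by (intro exI[of _ "[u]"]) simp
  next
    case False
    show ?thesis
    proof (cases "v < u")
      case True
      then have u2: "2 \<le> u" using less.prems by simp
      have pu: "pa d u < u" "1 \<le> pa d u" using pa_less[OF u2] pa_ge1 by auto
      obtain p where p: "length p = Suc (td d (pa d u) v)" "hd p = pa d u" "last p = v"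
        "\<forall>i<td d (pa d u) v. dadj d n (p ! i) (p ! Suc i)"
        using less.hyps[of "pa d u" v] pu less.prems True by auto
      have t: "td d u v = Suc (td d (pa d u) v)" using td_gt[of v u d] True less.prems by simp
      have adj: "dadj d n u (pa d u)" using dadj_iff[OF d] u2 pu less.prems by auto
      have p0: "p ! 0 = pa d u" using p hd_nth0[OF p(1)] by simp
      show ?thesis
      proof (intro exI[of _ "u # p"] conjI allI impI)
        show "length (u # p) = Suc (td d u v)" using p t by simp
        show "hd (u # p) = u" by simp
        show "last (u # p) = v" using p by (cases p) auto
        fix i assume i: "i < td d u v"
        show "dadj d n ((u # p) ! i) ((u # p) ! Suc i)"
        proof (cases i)
          case 0 then show ?thesis using adj p0 by simp
        next
          case (Suc j) then show ?thesis using p(4) i t by simp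
        qed
      qed
    next
      case False
      then have uv: "u < v" using \<open>u \<noteq> v\<close> by simp
      then have v2: "2 \<le> v" using less.prems by simp
      have pv: "pa d v < v" "1 \<le> pa d v" using pa_less[OF v2] pa_ge1 by auto
      obtain p where p: "length p = Suc (td d u (pa d v))" "hd p = u" "last p = pa d v"
        "\<forall>i<td d u (pa d v). dadj d n (p ! i) (p ! Suc i)"
        using less.hyps[of u "pa d v"] pv less.prems uv by auto
      have t: "td d u v = Suc (td d u (pa d v))" using td_lt[of u v d] uv less.prems by simp
      have adj: "dadj d n (pa d v) v" using dadj_iff[OF d] v2 pv less.prems by auto
      have pl: "p ! td d u (pa d v) = pa d v" using p last_nthk[OF p(1)] by simp
      show ?thesis
      proof (intro exI[of _ "p @ [v]"] conjI allI impI)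
        show "length (p @ [v]) = Suc (td d u v)" using p t by simp
        show "hd (p @ [v]) = u" using p by (cases p) auto
        show "last (p @ [v]) = v" by simp
        fix i assume i: "i < td d u v"
        show "dadj d n ((p @ [v]) ! i) ((p @ [v]) ! Suc i)"
        proof (cases "i < td d u (pa d v)")
          case True then show ?thesis using p(4) p(1) by (simp add: nth_append)
        next
          case False
          then have "i = td d u (pa d v)" using i t by simp
          then show ?thesis using adj pl p(1) by (simp add: nth_append)
        qed
      qed
    qed
  qed
qed

lemma gdist_td:
  assumes d: "2 \<le> d" and "1 \<le> u" "u \<le> n" "1 \<le> v" "v \<le> n"
  shows "gdist (dadj d n) u v = td d u v"
  unfolding gdist_def
proof (rule Least_equality)
  show "\<exists>p. length p = Suc (td d u v) \<and> hd p = u \<and> last p = v \<and>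
        (\<forall>i<td d u v. dadj d n (p ! i) (p ! Suc i))"
    using walk_exists[OF d assms(2-5)] .
  fix k assume "\<exists>p. length p = Suc k \<and> hd p = u \<and> last p = v \<and> (\<forall>i<k. dadj d n (p ! i) (p ! Suc i))"
  then obtain p where p: "length p = Suc k" "hd p = u" "last p = v" "\<forall>i<k. dadj d n (p ! i) (p ! Suc i)"
    by blast
  have "td d u (p ! k) \<le> k" using walk_lower[OF d assms(2) p(1,2,4)] by simp
  moreover have "p ! k = v" using p last_nthk[OF p(1)] by simp
  ultimately show "td d u v \<le> k" by simp
qed



definition prof :: "nat \<Rightarrow> real \<Rightarrow> nat \<Rightarrow> real" where
  "prof d q n = (\<Sum>u\<in>{1..<n}. q ^ td d u n)"

lemma WD_td:
  assumes d: "2 \<le> d"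
  shows "WD d n q = (\<Sum>(u, v) \<in> {(u, v). 1 \<le> u \<and> u < v \<and> v \<le> n}. q ^ td d u v)"
  unfolding WD_def
  by (rule sum.cong) (auto simp: gdist_td[OF d])

lemma WD_diff:
  assumes d: "2 \<le> d" and n: "1 \<le> n"
  shows "WD d n q - WD d (n - 1) q = prof d q n"
proof -
  let ?P = "\<lambda>n::nat. {(u::nat, v). 1 \<le> u \<and> u < v \<and> v \<le> n}"
  have fin: "finite (?P m)" for m
    by (rule finite_subset[of _ "{0..m} \<times> {0..m}"]) auto
  have split: "?P n = ?P (n - 1) \<union> (\<lambda>u. (u, n)) ` {1..<n}" using n by auto
  have disj: "?P (n - 1) \<inter> (\<lambda>u. (u, n)) ` {1..<n} = {}" using n by auto
  have "WD d n q = WD d (n - 1) q + (\<Sum>x \<in> (\<lambda>u. (u, n)) ` {1..<n}. (case x of (u, v) \<Rightarrow> q ^ td d u v))"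
    unfolding WD_td[OF d] split by (rule sum.union_disjoint) (use fin disj in auto)
  also have "(\<Sum>x \<in> (\<lambda>u. (u, n)) ` {1..<n}. (case x of (u, v) \<Rightarrow> q ^ td d u v)) = prof d q n"
    unfolding prof_def by (subst sum.reindex) (auto simp: inj_on_def)
  finally show ?thesis by simp
qed

lemma sum_const_ivl: "(\<And>u. u \<in> {a..<b} \<Longrightarrow> f u = c) \<Longrightarrow> (\<Sum>u\<in>{a..<b}. f u) = real (b - a) * (c::real)"
  by simp

lemma block:
  assumes d: "2 \<le> d" and a: "1 \<le> a"
  shows "(\<Sum>u\<in>{d*a+3..<d*(a+t)+3}. (f (pa d u) :: real)) = real d * (\<Sum>w\<in>{a+1..<a+t+1}. f w)"
proof (induction t)
  case 0 then show ?case by simp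
next
  case (Suc t)
  have c: "(\<Sum>u\<in>{d*(a+t)+3..<d*(a+Suc t)+3}. f (pa d u)) = real d * f (a + t + 1)"
  proof -
    have "(\<Sum>u\<in>{d*(a+t)+3..<d*(a+Suc t)+3}. f (pa d u)) = real (d*(a+Suc t)+3 - (d*(a+t)+3)) * f (a+t+1)"
    proof (rule sum_const_ivl)
      fix u assume u: "u \<in> {d*(a+t)+3..<d*(a+Suc t)+3}"
      have "pa d u = a + t + 1"
        using pa_char[OF d, of u "a+t+1"] u a by (auto simp: algebra_simps)
      then show "f (pa d u) = f (a+t+1)" by simp
    qed
    then show ?thesis by (simp add: algebra_simps)
  qed
  have "d*a+3 \<le> d*(a+t)+3" "d*(a+t)+3 \<le> d*(a+Suc t)+3" by simp_all
  then have "(\<Sum>u\<in>{d*a+3..<d*(a+Suc t)+3}. f (pa d u)) =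
     (\<Sum>u\<in>{d*a+3..<d*(a+t)+3}. f (pa d u)) + (\<Sum>u\<in>{d*(a+t)+3..<d*(a+Suc t)+3}. f (pa d u))"
    by (simp add: sum.atLeastLessThan_concat)
  also have "\<dots> = real d * (\<Sum>w\<in>{a+1..<a+t+1}. f w) + real d * f (a+t+1)" using Suc c by simp
  also have "\<dots> = real d * (\<Sum>w\<in>{a+1..<a+Suc t+1}. f w)" by (simp add: algebra_simps)
  finally show ?case .
qed



lemma prof_1: "prof d q 1 = 0" by (simp add: prof_def)

lemma prof_up:
  assumes "2 \<le> n"
  shows "prof d q n = q * (\<Sum>u\<in>{1..<n}. q ^ td d u (pa d n))"
  unfolding prof_def sum_distrib_left
  by (rule sum.cong) (auto simp: td_lt)

lemma alg_rec:
  fixes X Y Z q D P PP N :: real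
  assumes "X = q + (P + D - 2 - D*PP)*q^2 + D*q^2*Y"
    and "Z = q * (X + 1 + (D*PP + 2 - P) * q^2 + q * (D * (X - q * (Y + 1))) + (N - D*P + D - 3) * q)"
  shows "Z = q + (N + D - 2 - D*P)*q^2 + D*q^2*X"
proof -
  have "Z - (q + (N + D - 2 - D*P)*q^2 + D*q^2*X) = q * (X - (q + (P + D - 2 - D*PP)*q^2 + D*q^2*Y))"
    unfolding assms(2) by (simp add: algebra_simps power2_eq_square)
  then show ?thesis using assms(1) by simp
qed

lemma prof_rec:
  assumes d: "2 \<le> d"
  shows "2 \<le> n \<Longrightarrow> prof d q n = q + real (n + d - 2 - d * pa d n) * q^2 + real d * q^2 * prof d q (pa d n)"
proof (induction n rule: less_induct)
  case (less n)
  show ?case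
  proof (cases "n \<le> d + 2")
    case True
    have p1: "pa d n = 1" using pa_char[OF d less.prems, of 1] True by simp
    have "(\<Sum>u\<in>{1..<n}. q ^ td d u 1) = (\<Sum>u\<in>{1..<2}. q ^ td d u 1) + (\<Sum>u\<in>{2..<n}. q ^ td d u 1)"
      using less.prems by (simp add: sum.atLeastLessThan_concat)
    also have "(\<Sum>u\<in>{2..<n}. q ^ td d u 1) = real (n - 2) * q"
    proof (rule sum_const_ivl)
      fix u assume u: "u \<in> {2..<n}"
      have "pa d u = 1" using pa_char[OF d, of u 1] u True by simp
      then show "q ^ td d u 1 = q" using td_gt[of 1 u d] u by simp
    qed
    moreover have "{1..<2::nat} = {1}" by auto
    ultimately have "(\<Sum>u\<in>{1..<n}. q ^ td d u 1) = 1 + real (n - 2) * q" by simp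
    then show ?thesis using prof_up[OF less.prems] p1 prof_1
      by (simp add: algebra_simps power2_eq_square)
  next
    case False
    define p where "p = pa d n"
    define pp where "pp = pa d p"
    have p2: "2 \<le> p" using pa_char[OF d less.prems, of 1] False pa_ge1[of d n] unfolding p_def by auto
    have pn: "p < n" using pa_less[OF less.prems] unfolding p_def by simp
    have np: "n \<le> d * p + 2" "d * p + 3 \<le> n + d"
      using pa_props[OF d less.prems] p2 unfolding p_def by auto
    have ppp: "pp < p" "1 \<le> pp" using pa_less[OF p2] pa_ge1 unfolding pp_def by auto
    have pq: "p \<le> d * pp + 2" "pp = 1 \<or> d * pp + 3 \<le> p + d"
      using pa_props[OF d p2] unfolding pp_def by auto
    have IH: "prof d q p = q + real (p + d - 2 - d * pp) * q^2 + real d * q^2 * prof d q pp"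
      using less.IH[OF pn p2] unfolding pp_def .
    have dpp: "d * pp \<le> d * (p - 1)" using ppp by (intro mult_le_mono2) simp
    have dp1: "d * (p - 1) + d = d * p" using p2 by (cases p) (auto simp: algebra_simps)
    let ?f = "\<lambda>u. q ^ td d u p"
    have c1: "(\<Sum>u\<in>{1..<n}. ?f u) = (\<Sum>u\<in>{1..<p}. ?f u) + (\<Sum>u\<in>{p..<p+1}. ?f u)
       + (\<Sum>u\<in>{p+1..<d*pp+3}. ?f u) + (\<Sum>u\<in>{d*pp+3..<d*(p-1)+3}. ?f u) + (\<Sum>u\<in>{d*(p-1)+3..<n}. ?f u)"
    proof -
      have o: "1 \<le> p" "p \<le> p + 1" "p + 1 \<le> d*pp+3" "d*pp+3 \<le> d*(p-1)+3" "d*(p-1)+3 \<le> n"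
        using p2 pq dpp np dp1 by linarith+
      show ?thesis
        by (simp only: sum.atLeastLessThan_concat[OF o(4) o(5)] sum.atLeastLessThan_concat[OF o(3) order_trans[OF o(4) o(5)]]
          sum.atLeastLessThan_concat[OF o(2) order_trans[OF o(3) order_trans[OF o(4) o(5)]]]
          sum.atLeastLessThan_concat[OF o(1) order_trans[OF o(2) order_trans[OF o(3) order_trans[OF o(4) o(5)]]]] add.assoc)
    qed
    have I1: "(\<Sum>u\<in>{1..<p}. ?f u) = prof d q p" by (simp add: prof_def)
    have I2: "(\<Sum>u\<in>{p..<p+1}. ?f u) = 1" by simp
    have I3: "(\<Sum>u\<in>{p+1..<d*pp+3}. ?f u) = real (d*pp+3 - (p+1)) * q^2"
    proof (rule sum_const_ivl)
      fix u assume u: "u \<in> {p+1..<d*pp+3}"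
      have "pa d u = pp" using pa_char[OF d _ ppp(2), of u] u pq p2 by auto
      then have "td d u p = Suc (td d pp p)" using td_gt[of p u d] u p2 by simp
      also have "td d pp p = 1" using td_lt[of pp p d] ppp unfolding pp_def by simp
      finally show "?f u = q^2" by (simp add: power2_eq_square)
    qed
    have I4: "(\<Sum>u\<in>{d*pp+3..<d*(p-1)+3}. ?f u) = q * (real d * (prof d q p - q * (prof d q pp + 1)))"
    proof -
      have "(\<Sum>u\<in>{d*pp+3..<d*(p-1)+3}. ?f u) = (\<Sum>u\<in>{d*pp+3..<d*(p-1)+3}. q * q ^ td d (pa d u) p)"
      proof (rule sum.cong)
        fix u assume u: "u \<in> {d*pp+3..<d*(p-1)+3}"
        then have "p < u" using pq by auto
        then show "?f u = q * q ^ td d (pa d u) p" using td_gt[of p u d] p2 by simp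
      qed simp
      also have "\<dots> = q * (\<Sum>u\<in>{d*pp+3..<d*(pp+(p-1-pp))+3}. q ^ td d (pa d u) p)"
        using ppp by (simp add: sum_distrib_left)
      also have "(\<Sum>u\<in>{d*pp+3..<d*(pp+(p-1-pp))+3}. q ^ td d (pa d u) p) = real d * (\<Sum>w\<in>{pp+1..<pp+(p-1-pp)+1}. ?f w)"
        by (rule block[OF d ppp(2)])
      also have "pp+(p-1-pp)+1 = p" using ppp by simp
      also have "(\<Sum>w\<in>{pp+1..<p}. ?f w) = prof d q p - (\<Sum>w\<in>{1..<pp+1}. ?f w)"
        unfolding prof_def using ppp sum.atLeastLessThan_concat[of 1 "pp+1" p ?f] by simp
      also have "(\<Sum>w\<in>{1..<pp+1}. ?f w) = q * (\<Sum>w\<in>{1..<pp+1}. q ^ td d w pp)"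
        unfolding sum_distrib_left
        by (rule sum.cong) (use ppp in \<open>auto simp: td_lt pp_def\<close>)
      also have "(\<Sum>w\<in>{1..<pp+1}. q ^ td d w pp) = prof d q pp + 1"
        unfolding prof_def using ppp by simp
      finally show ?thesis by simp
    qed
    have I5: "(\<Sum>u\<in>{d*(p-1)+3..<n}. ?f u) = real (n - (d*(p-1)+3)) * q"
    proof (rule sum_const_ivl)
      fix u assume u: "u \<in> {d*(p-1)+3..<n}"
      have "pa d u = p" using pa_char[OF d _ , of u p] u np p2 dp1 by auto
      moreover have pd: "p - 1 \<le> d * (p - 1)" using d by simp
      have "p < u" using u p2 pd by (simp only: atLeastLessThan_iff) linarith
      ultimately show "?f u = q" using td_gt[of p u d] p2 by simp
    qed
    have r1: "real (p + d - 2 - d * pp) = real p + real d - 2 - real d * real pp"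
      using pq p2 by (auto simp: of_nat_diff)
    have r2: "real (d*pp+3 - (p+1)) = real d * real pp + 2 - real p" using pq by (simp add: of_nat_diff)
    have r3: "real (n - (d*(p-1)+3)) = real n - real d * real p + real d - 3"
    proof -
      have "real (d*(p-1)) = real d * real p - real d" using dp1
        by (metis add_diff_cancel_right' of_nat_add of_nat_mult)
      then show ?thesis using np dp1 by (simp add: of_nat_diff)
    qed
    have r4: "real (n + d - 2 - d * p) = real n + real d - 2 - real d * real p" using np by (simp add: of_nat_diff)
    have "prof d q n = q * (prof d q p + 1 + (real d * real pp + 2 - real p) * q^2
        + q * (real d * (prof d q p - q * (prof d q pp + 1))) + (real n - real d * real p + real d - 3) * q)"
      using prof_up[OF less.prems] c1 I1 I2 I3 I4 I5 r2 r3 unfolding p_def by simp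
    then show ?thesis unfolding p_def[symmetric] r4 using IH r1 alg_rec by simp
  qed
qed



lemma geo: fixes d :: nat assumes "1 \<le> d" shows "(d - 1) * (\<Sum>i<k. d^i) = d^k - 1"
proof (induction k)
  case 0 then show ?case by simp
next
  case (Suc k)
  have "1 \<le> d^k" using assms by simp
  have "(d - 1) * (\<Sum>i<Suc k. d^i) = (d^k - 1) + (d - 1) * d^k" using Suc by (simp add: algebra_simps)
  also have "\<dots> = d^Suc k - 1" using \<open>1 \<le> d^k\<close> assms by (simp add: algebra_simps diff_mult_distrib)
  finally show ?case .
qed

definition Gs :: "nat \<Rightarrow> nat \<Rightarrow> nat" where "Gs d k = (\<Sum>i<k. d^i)"

lemma G_eq: "2 \<le> d \<Longrightarrow> (d^k - 1) div (d - 1) = Gs d k"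
  using geo[of d k] unfolding Gs_def by (metis One_nat_def diff_is_0_eq nonzero_mult_div_cancel_left not_one_le_zero numeral_le_one_iff one_le_numeral order_trans semiring_norm(69) Suc_leD le_add_diff_inverse2 nat_le_linear)

lemma Gs_Suc: "Gs d (Suc k) = 1 + d * Gs d k"
  unfolding Gs_def sum.lessThan_Suc_shift by (simp add: sum_distrib_left)

lemma nk_eq: "2 \<le> d \<Longrightarrow> nk d k = 2 + (d+1) * Gs d k"
proof - assume "2 \<le> d" then show ?thesis by (simp only: nk_def G_eq) qed
lemma mk_eq: "2 \<le> d \<Longrightarrow> mk d k = 3 + 2 * d * Gs d k"
proof - assume "2 \<le> d" then show ?thesis by (simp only: mk_def G_eq) qed

lemma nkS: "2 \<le> d \<Longrightarrow> nk d (Suc k) + d = d * nk d k + 3"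
  by (simp add: nk_eq Gs_Suc algebra_simps)
lemma mkS: "2 \<le> d \<Longrightarrow> mk d (Suc k) + d = d * mk d k + 3"
  by (simp add: mk_eq Gs_Suc algebra_simps)
lemma nk_ge: "2 \<le> d \<Longrightarrow> d + 3 \<le> nk d (Suc k)"
  by (simp add: nk_eq Gs_Suc)
lemma nk0: "2 \<le> d \<Longrightarrow> nk d 0 = 2" by (simp add: nk_eq Gs_def)
lemma nk1: "2 \<le> d \<Longrightarrow> nk d 1 = d + 3" by (simp add: nk_eq Gs_def)
lemma mk0: "2 \<le> d \<Longrightarrow> mk d 0 = 3" by (simp add: mk_eq Gs_def)
lemma nk_ge2: "2 \<le> d \<Longrightarrow> 2 \<le> nk d k" by (simp add: nk_eq)
lemma mk_ge3: "2 \<le> d \<Longrightarrow> 3 \<le> mk d k" by (simp add: mk_eq)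

definition FF :: "nat \<Rightarrow> real \<Rightarrow> nat \<Rightarrow> nat \<Rightarrow> real" where
  "FF d q k n = (\<Sum>i\<le>k. real (d ^ i) * q ^ (2 * i + 1))
         + (\<Sum>i < (if n < mk d k then k else Suc k).
              real (d ^ i) * real (lbl d k n i + 1) * q ^ (2 * i + 2))"

lemma cancel_lt: fixes d a b :: nat shows "d * a < d * b \<Longrightarrow> a < b" by simp

lemma main:
  assumes d: "2 \<le> d"
  shows "nk d k \<le> n \<Longrightarrow> n < nk d (Suc k) \<Longrightarrow> prof d q n = FF d q k n"
proof (induction k arbitrary: n)
  case 0
  have n2: "2 \<le> n" "n < d + 3" using 0 nk0[OF d] nk1[OF d] by auto
  have p1: "pa d n = 1" using pa_char[OF d n2(1), of 1] n2 by simp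
  have pr: "prof d q n = q + real (n - 2) * q^2"
    using prof_rec[OF d n2(1)] p1 prof_1 by simp
  show ?case
  proof (cases "n < 3")
    case True
    then have "n = 2" using n2 by simp
    then show ?thesis using pr mk0[OF d] unfolding FF_def by simp
  next
    case False
    have "lbl d 0 n 0 = n - 3"
    proof -
      have "lbl d 0 n 0 = (n + d - 3) mod d" unfolding lbl_def nk0[OF d] using n2 d by simp
      also have "\<dots> = (n - 3) mod d" using le_mod_geq[of d "n + d - 3"] False d by simp
      also have "\<dots> = n - 3"
      proof -
        have lt: "n - 3 < d" using n2(2) d by arith
        show ?thesis using mod_less[OF lt] .
      qed
      finally show ?thesis .
    qed
    then show ?thesis using pr mk0[OF d] False unfolding FF_def by (simp add: of_nat_diff power2_eq_square)
  qed
next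
  case (Suc k)
  have nd: "d + 3 \<le> n" using Suc.prems nk_ge[OF d, of k] by simp
  define t where "t = (n - 3) div d"
  define j where "j = (n - 3) mod d"
  have jd: "j < d" using d unfolding j_def by simp
  have ntj: "n = d * t + j + 3" unfolding t_def j_def using nd div_mult_mod_eq[of "n - 3" d] by simp
  have pt: "pa d n = t + 1"
  proof -
    have "(n + d - 3) div d = (n - 3 + d) div d" using nd by (simp add: algebra_simps)
    also have "\<dots> = t + 1" unfolding t_def using d by simp
    finally show ?thesis unfolding pa_def by simp
  qed
  define p where "p = t + 1"
  have n2: "2 \<le> n" using nd by simp
  have plo: "nk d k \<le> p"
  proof -
    have "d * nk d k + 3 \<le> n + d" using nkS[OF d, of k] Suc.prems by simp
    then have "d * nk d k < d * (t + 2)" using ntj jd by (simp add: algebra_simps)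
    then have "nk d k < t + 2" by (rule cancel_lt)
    then show ?thesis unfolding p_def by simp
  qed
  have phi: "p < nk d (Suc k)"
  proof -
    have "n + d < d * nk d (Suc k) + 3" using nkS[OF d, of "Suc k"] Suc.prems by simp
    then have "d * (t + 1) < d * nk d (Suc k)" using ntj by (simp add: algebra_simps)
    then show ?thesis unfolding p_def by (rule cancel_lt)
  qed
  have p2: "2 \<le> p" using plo nk_ge2[OF d, of k] by simp
  have IH: "prof d q p = FF d q k p" using Suc.IH[OF plo phi] .
  have rec: "prof d q n = q + real (j + 1) * q^2 + real d * q^2 * prof d q p"
  proof -
    have "n + d - 2 - d * pa d n = j + 1" using ntj pt by (simp add: algebra_simps)
    then show ?thesis using prof_rec[OF d n2] pt unfolding p_def by simp
  qed
  have xn: "n - nk d (Suc k) + (d - 1) * d ^ Suc k = d * (p - nk d k + (d - 1) * d ^ k) + j"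
  proof -
    have "n - nk d (Suc k) = (n + d) - (nk d (Suc k) + d)" by simp
    also have "\<dots> = (d * p + j + 3) - (d * nk d k + 3)" unfolding nkS[OF d] using ntj unfolding p_def
      by (simp add: algebra_simps)
    also have "\<dots> = (d * p - d * nk d k) + j" using mult_le_mono2[OF plo, of d] by simp
    also have "\<dots> = d * (p - nk d k) + j" by (simp add: diff_mult_distrib2)
    finally show ?thesis by (simp add: algebra_simps)
  qed
  have l0: "lbl d (Suc k) n 0 = j" unfolding lbl_def xn using jd by simp
  have lS: "lbl d (Suc k) n (Suc i) = lbl d k p i" for i
  proof -
    define y where "y = p - nk d k + (d - 1) * d ^ k"
    have h: "(d * y + j) div d = y" using jd d by simp
    have "lbl d (Suc k) n (Suc i) = ((d * y + j) div d ^ Suc i) mod d" unfolding lbl_def xn y_def ..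
    also have "(d * y + j) div d ^ Suc i = ((d * y + j) div d) div d ^ i" by (simp add: div_mult2_eq)
    also have "\<dots> = y div d ^ i" using h by simp
    finally show ?thesis unfolding lbl_def y_def by simp
  qed
  have mc: "n < mk d (Suc k) \<longleftrightarrow> p < mk d k"
  proof -
    have "n < mk d (Suc k) \<longleftrightarrow> n + d < mk d (Suc k) + d" by simp
    also have "\<dots> \<longleftrightarrow> d * p + j < d * mk d k" unfolding mkS[OF d] ntj p_def by (simp add: algebra_simps)
    also have "\<dots> \<longleftrightarrow> p < mk d k"
    proof
      assume "d * p + j < d * mk d k" then have "d * p < d * mk d k" by linarith
      then show "p < mk d k" by (rule cancel_lt)
    next
      assume "p < mk d k" then have "d * (p + 1) \<le> d * mk d k" by (intro mult_le_mono2) simp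
      then show "d * p + j < d * mk d k" using jd by (simp add: algebra_simps)
    qed
    finally show ?thesis .
  qed
  define K where "K = (if p < mk d k then k else Suc k)"
  have KK: "(if n < mk d (Suc k) then Suc k else Suc (Suc k)) = Suc K" unfolding K_def using mc by simp
  have s1: "(\<Sum>i\<le>Suc k. real (d ^ i) * q ^ (2 * i + 1)) = q + real d * q^2 * (\<Sum>i\<le>k. real (d ^ i) * q ^ (2 * i + 1))"
    unfolding sum.atMost_Suc_shift by (simp add: sum_distrib_left power2_eq_square algebra_simps)
  have s2: "(\<Sum>i<Suc K. real (d ^ i) * real (lbl d (Suc k) n i + 1) * q ^ (2 * i + 2))
     = real (j + 1) * q^2 + real d * q^2 * (\<Sum>i<K. real (d ^ i) * real (lbl d k p i + 1) * q ^ (2 * i + 2))"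
    unfolding sum.lessThan_Suc_shift by (simp add: sum_distrib_left l0 lS power2_eq_square algebra_simps)
  have "FF d q (Suc k) n = q + real (j + 1) * q^2 + real d * q^2 * FF d q k p"
    unfolding FF_def KK s1 s2 K_def[symmetric] by (simp add: algebra_simps)
  then show ?case using rec IH by simp
qed


theorem lemma2p1:
  fixes d n k :: nat and q :: real
  assumes "d \<ge> 2" and "n \<ge> 2" and "nk d k \<le> n" and "n < nk d (Suc k)"
  shows "WD d n q - WD d (n - 1) q =
           (\<Sum>i\<le>k. real (d ^ i) * q ^ (2 * i + 1))
         + (\<Sum>i < (if n < mk d k then k else Suc k).
              real (d ^ i) * real (lbl d k n i + 1) * q ^ (2 * i + 2))"
proof -
  have "WD d n q - WD d (n - 1) q = prof d q n" using WD_diff[OF assms(1)] assms(2) by simp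
  also have "\<dots> = FF d q k n" using main[OF assms(1) assms(3) assms(4)] .
  finally show ?thesis unfolding FF_def .
qed

end
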